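(* Consider the MT-model on $\mathbb{T}_d$, $d\ge2$, and let $X$ be the number of successors of a given non-root vertex $v$ that are ever informed, conditionally on $v$ being informed (the number of spreaders generated by a spreader other than the root). Then $$\mathbb{P}(X=i)=\binom{d}{i}\frac{(i+1)!}{(d+1)^{i+1}},\qquad i\in\{0,\dots,d\}.$$ Moreover, $\mathbb{E}(X)>1$ if and only if $d\ge3$ (and $\mathbb{E}(X)=8/9$ when $d=2$).
   Context: Let $d\ge 2$ and let $\mathbb{T}_d$ be the infinite tree in which every vertex has degree $d+1$, with root $\mathbf 0$; the successors of a vertex $u$ are its neighbours farther from $\mathbf 0$ (each non-root vertex has $d$ successors and one parent). The MT-model on $\mathbb{T}_d$ is the continuous-time Markov process $(\eta_t)_{t\ge0}$ on $\{-1,0,1\}^{\mathbb{T}_d}$ ($-1$ = ignorant, $0$ = spreader, $1$ = stifler) in which a vertex in state $-1$ jumps to $0$ at rate equal to its number of neighbours in state $0$, and a vertex in state $0$ jumps to $1$ at rate equal to its number of neighbours in states $\{0,1\}$ (equivalently, each spreader contacts each neighbour at rate 1, informing ignorants and becoming a stifler upon contacting a non-ignorant). Initially $\eta_0(\mathbf 0)=0$ and all other vertices are in state $-1$. *)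

theory Defs
  imports "HOL-Probability.Probability"
begin

text \<open>Vertices of the tree T_d are encoded as lists of naturals: the root is the
empty list, and the child of u in direction k is k # u (so the parent of a
non-root vertex w is tl w).  The root has d+1 children [0],...,[d]; every
non-root vertex u has d children 0#u,...,(d-1)#u.  Hence every vertex has
degree d+1.\<close>

type_synonym vertex = "nat list"

definition tvertex :: "nat \<Rightarrow> vertex \<Rightarrow> bool" where
  "tvertex d u \<longleftrightarrow> u = [] \<or> (last u \<le> d \<and> (\<forall>x\<in>set (butlast u). x < d))"

definition children :: "nat \<Rightarrow> vertex \<Rightarrow> vertex set" where
  "children d u = (if u = [] then {[k] | k. k \<le> d} else {k # u | k. k < d})"

definition nbrs :: "nat \<Rightarrow> vertex \<Rightarrow> vertex set" where
  "nbrs d u = children d u \<union> (if u = [] then {} else {tl u})"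

text \<open>Configurations: -1 ignorant, 0 spreader, 1 stifler.\<close>
type_synonym config = "vertex \<Rightarrow> int"

definition mt_init :: config where
  "mt_init = (\<lambda>u. if u = [] then 0 else -1)"

definition contact :: "config \<Rightarrow> vertex \<times> vertex \<Rightarrow> config" where
  "contact \<eta> p = (if \<eta> (snd p) = -1 then \<eta>(snd p := 0) else \<eta>(fst p := 1))"

text \<open>Embedded jump chain of the MT-model: every (spreader, neighbour) pair
carries rate 1 and every such contact changes the configuration, so the next
transition is a uniformly chosen such pair.\<close>
definition mt_step :: "nat \<Rightarrow> config \<Rightarrow> config pmf" where
  "mt_step d \<eta> =
     (let P = {(s, w). tvertex d s \<and> \<eta> s = 0 \<and> w \<in> nbrs d s}
      in if P = {} then return_pmf \<eta> else map_pmf (contact \<eta>) (pmf_of_set P))"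

definition mt_state :: "nat \<Rightarrow> nat \<Rightarrow> config pmf" where
  "mt_state d n = ((\<lambda>p. bind_pmf p (mt_step d)) ^^ n) (return_pmf mt_init)"

text \<open>q d v j = P(v is ever informed and at least j successors of v are ever
informed).  This event is the increasing union over n of the corresponding
events at jump n, so its probability is the supremum.\<close>
definition mt_q :: "nat \<Rightarrow> vertex \<Rightarrow> nat \<Rightarrow> real" where
  "mt_q d v j = (SUP n. measure_pmf.prob (mt_state d n)
      {\<eta>. \<eta> v \<noteq> -1 \<and> j \<le> card {c \<in> children d v. \<eta> c \<noteq> -1}})"

text \<open>P(X = i | v informed), X = number of successors of v ever informed.\<close>
definition mt_X_dist :: "nat \<Rightarrow> vertex \<Rightarrow> nat \<Rightarrow> real" where
  "mt_X_dist d v i = (mt_q d v i - mt_q d v (Suc i)) / mt_q d v 0"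

definition mt_X_mean :: "nat \<Rightarrow> vertex \<Rightarrow> real" where
  "mt_X_mean d v = (\<Sum>i\<in>{0..d}. real i * mt_X_dist d v i)"

end

theory Submission
  imports Defs
begin

lemma integral_bind_pmf':
  fixes f :: "_ \<Rightarrow> real" assumes "\<And>x. \<bar>f x\<bar> \<le> B"
  shows "measure_pmf.expectation (bind_pmf M N) f = measure_pmf.expectation M (\<lambda>x. measure_pmf.expectation (N x) f)"
  unfolding measure_pmf_bind
  apply (rule integral_bind[where K="count_space UNIV" and B=B and B'=1])
  using assms by (auto simp: measurable_measure_pmf measure_pmf.emeasure_space_1 intro!: measurable_space[OF measurable_measure_pmf])

lemma integral_return_pmf'[simp]:
  fixes f :: "_ \<Rightarrow> real"
  shows "measure_pmf.expectation (return_pmf x) f = f x"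
  by (simp add: return_pmf.rep_eq integral_return)

lemma integrable_bnd:
  fixes f :: "_ \<Rightarrow> real" assumes "\<And>x. \<bar>f x\<bar> \<le> B"
  shows "integrable (measure_pmf M) f"
  by (rule measure_pmf.integrable_const_bound[where B=B]) (use assms in auto)

lemma prob_as_exp:
  "measure_pmf.prob M {x. P x} = measure_pmf.expectation M (\<lambda>x. if P x then 1 else 0)"
proof -
  have "measure_pmf.prob M {x. P x} = measure_pmf.expectation M (indicator {x. P x})"
    by simp
  also have "indicator {x. P x} = (\<lambda>x. if P x then 1 else (0::real))"
    by (auto simp: indicator_def)
  finally show ?thesis .
qed

definition PS :: "nat \<Rightarrow> config \<Rightarrow> (vertex \<times> vertex) set" where
  "PS d \<eta> = {(s, w). tvertex d s \<and> \<eta> s = 0 \<and> w \<in> nbrs d s}"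

lemma mt_step_alt: "mt_step d \<eta> = (if PS d \<eta> = {} then return_pmf \<eta> else map_pmf (contact \<eta>) (pmf_of_set (PS d \<eta>)))"
  unfolding mt_step_def PS_def Let_def by (rule refl)

lemma mt_state_Suc: "mt_state d (Suc n) = bind_pmf (mt_state d n) (mt_step d)"
  by (simp add: mt_state_def)

lemma mt_state_0: "mt_state d 0 = return_pmf mt_init"
  by (simp add: mt_state_def)

lemma nbrs_cases: "w \<in> nbrs d s \<Longrightarrow> (w \<noteq> [] \<and> tl w = s) \<or> (s \<noteq> [] \<and> w = tl s)"
  by (auto simp: nbrs_def children_def split: if_splits)

lemma children_eq: "u \<noteq> [] \<Longrightarrow> children d u = (\<lambda>k. k # u) ` {..<d}"
  by (auto simp: children_def)

lemma finite_children: "finite (children d u)"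
  by (auto simp: children_def)

lemma card_children_le: "card (children d u) \<le> Suc d"
proof (cases "u = []")
  case True
  have "children d u = (\<lambda>k. [k]) ` {..d}" using True by (auto simp: children_def)
  then show ?thesis by (metis card_atMost card_image_le finite_atMost)
next
  case False
  then show ?thesis by (simp add: children_eq card_image_le order_trans[OF card_image_le])
qed

lemma card_children_nonroot: "u \<noteq> [] \<Longrightarrow> card (children d u) = d"
  by (simp add: children_eq card_image inj_on_def)

lemma finite_nbrs: "finite (nbrs d s)"
  by (simp add: nbrs_def finite_children)

lemma card_nbrs_le: "card (nbrs d s) \<le> Suc d"
proof (cases "s = []")
  case True then show ?thesis using card_children_le[of d s] by (simp add: nbrs_def)
next
  case False
  have "card (nbrs d s) \<le> Suc (card (children d s))"
    using False by (simp add: nbrs_def finite_children card_insert_le_m1 card_insert_if)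
  then show ?thesis using False by (simp add: card_children_nonroot)
qed

lemma tl_notin_children: "u \<noteq> [] \<Longrightarrow> tl u \<notin> children d u"
  by (auto simp: children_def dest: arg_cong[of _ _ length])

lemma nbrs_nonroot: "u \<noteq> [] \<Longrightarrow> nbrs d u = insert (tl u) (children d u)"
  by (auto simp: nbrs_def)

lemma card_nbrs_nonroot: "u \<noteq> [] \<Longrightarrow> card (nbrs d u) = Suc d"
  by (simp add: nbrs_nonroot finite_children tl_notin_children card_children_nonroot)

definition minv :: "nat \<Rightarrow> config \<Rightarrow> bool" where
  "minv n \<eta> \<longleftrightarrow> (\<forall>u. \<eta> u = -1 \<or> \<eta> u = 0 \<or> \<eta> u = 1) \<and> finite {u. \<eta> u \<noteq> -1}
     \<and> card {u. \<eta> u \<noteq> -1} \<le> Suc n \<and> (\<forall>u. u \<noteq> [] \<longrightarrow> \<eta> u \<noteq> -1 \<longrightarrow> \<eta> (tl u) \<noteq> -1)"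

lemma PS_sub: "PS d \<eta> \<subseteq> Sigma {u. \<eta> u \<noteq> -1} (nbrs d)"
  by (auto simp: PS_def)

lemma finite_PS: "minv n \<eta> \<Longrightarrow> finite (PS d \<eta>)"
  by (rule finite_subset[OF PS_sub]) (auto simp: minv_def finite_nbrs)

lemma card_PS: "minv n \<eta> \<Longrightarrow> card (PS d \<eta>) \<le> Suc d * Suc n"
proof -
  assume m: "minv n \<eta>"
  let ?A = "{u. \<eta> u \<noteq> -1}"
  have fA: "finite ?A" and cA: "card ?A \<le> Suc n" using m by (auto simp: minv_def)
  have "card (PS d \<eta>) \<le> card (Sigma ?A (nbrs d))"
    by (rule card_mono[OF _ PS_sub]) (simp add: fA finite_nbrs)
  also have "\<dots> = (\<Sum>a\<in>?A. card (nbrs d a))" using fA finite_nbrs by simp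
  also have "\<dots> \<le> (\<Sum>a\<in>?A. Suc d)" by (rule sum_mono) (rule card_nbrs_le)
  also have "\<dots> = card ?A * Suc d" by simp
  also have "\<dots> \<le> Suc d * Suc n" using cA by (metis mult.commute mult_le_mono1)
  finally show ?thesis .
qed

lemma contact_PS: "(s, w) \<in> PS d \<eta> \<Longrightarrow> contact \<eta> (s, w) = (if \<eta> w = -1 then \<eta>(w := 0) else \<eta>(s := 1))"
  by (simp add: contact_def)

lemma set_mt_step: "minv n \<eta> \<Longrightarrow> set_pmf (mt_step d \<eta>) = (if PS d \<eta> = {} then {\<eta>} else contact \<eta> ` PS d \<eta>)"
  by (simp add: mt_step_alt finite_PS)

lemma minv_step:
  assumes m: "minv n \<eta>" and p: "p \<in> PS d \<eta>"
  shows "minv (Suc n) (contact \<eta> p)"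
proof -
  obtain s w where pw: "p = (s, w)" by (cases p)
  have s0: "\<eta> s = 0" and wn: "w \<in> nbrs d s" using p pw by (auto simp: PS_def)
  show ?thesis
  proof (cases "\<eta> w = -1")
    case True
    have ce: "contact \<eta> p = \<eta>(w := 0)" using True pw by (simp add: contact_def)
    have ws: "w \<noteq> s" using True s0 by auto
    have "{u. (\<eta>(w := 0)) u \<noteq> -1} = insert w {u. \<eta> u \<noteq> -1}" by auto
    moreover have par: "w \<noteq> [] \<Longrightarrow> \<eta> (tl w) \<noteq> -1"
      using nbrs_cases[OF wn] m s0 True unfolding minv_def by (metis zero_neq_neg_one)
    ultimately show ?thesis using m unfolding ce minv_def
      by (auto simp: card_insert_if)
  next
    case False
    have ce: "contact \<eta> p = \<eta>(s := 1)" using False pw by (simp add: contact_def)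
    have "{u. (\<eta>(s := 1)) u \<noteq> -1} = {u. \<eta> u \<noteq> -1}" using s0 by auto
    then show ?thesis using m s0 unfolding ce minv_def
      by auto
  qed
qed

lemma minv_mono: "minv n \<eta> \<Longrightarrow> minv (Suc n) \<eta>"
  by (auto simp: minv_def)

lemma set_mt_state: "\<eta> \<in> set_pmf (mt_state d n) \<Longrightarrow> minv n \<eta>"
proof (induction n arbitrary: \<eta>)
  case 0
  have "{u. mt_init u \<noteq> -1} = {[]}" by (auto simp: mt_init_def)
  then show ?case using 0 by (auto simp: mt_state_0 minv_def mt_init_def)
next
  case (Suc n)
  then obtain \<zeta> where z: "\<zeta> \<in> set_pmf (mt_state d n)" and e: "\<eta> \<in> set_pmf (mt_step d \<zeta>)"
    by (auto simp: mt_state_Suc)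
  have m: "minv n \<zeta>" using Suc.IH z by blast
  show ?case using e m set_mt_step[OF m, of d] minv_step[OF m] minv_mono[OF m]
    by (auto split: if_splits)
qed

lemma exp_bnd:
  fixes F :: "_ \<Rightarrow> real" assumes "\<And>x. \<bar>F x\<bar> \<le> B"
  shows "\<bar>measure_pmf.expectation M F\<bar> \<le> B"
proof -
  have i: "integrable (measure_pmf M) F" by (rule integrable_bnd[OF assms])
  have "measure_pmf.expectation M F \<le> B"
    by (rule measure_pmf.integral_le_const[OF i]) (use assms abs_le_D1 in auto)
  moreover have "- B \<le> measure_pmf.expectation M F"
  proof (rule measure_pmf.integral_ge_const[OF i], rule AE_pmfI)
    fix x show "- B \<le> F x" using assms[of x] by (auto simp: abs_le_iff)
  qed
  ultimately show ?thesis by auto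
qed

lemma step_le:
  fixes F G :: "config \<Rightarrow> real"
  assumes le: "\<And>\<eta>. minv n \<eta> \<Longrightarrow> G \<eta> \<le> measure_pmf.expectation (mt_step d \<eta>) F"
    and bF: "\<And>x. \<bar>F x\<bar> \<le> B" and bG: "\<And>x. \<bar>G x\<bar> \<le> B'"
  shows "measure_pmf.expectation (mt_state d n) G \<le> measure_pmf.expectation (mt_state d (Suc n)) F"
proof -
  have "measure_pmf.expectation (mt_state d (Suc n)) F
      = measure_pmf.expectation (mt_state d n) (\<lambda>\<eta>. measure_pmf.expectation (mt_step d \<eta>) F)"
    by (simp only: mt_state_Suc integral_bind_pmf'[OF bF])
  moreover have "measure_pmf.expectation (mt_state d n) G \<le> \<dots>"
  proof (rule integral_mono_AE)
    show "integrable (measure_pmf (mt_state d n)) G" by (rule integrable_bnd[OF bG])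
    show "integrable (measure_pmf (mt_state d n)) (\<lambda>\<eta>. measure_pmf.expectation (mt_step d \<eta>) F)"
      by (rule integrable_bnd[OF exp_bnd[OF bF]])
    show "AE x in measure_pmf (mt_state d n). G x \<le> measure_pmf.expectation (mt_step d x) F"
      by (rule AE_pmfI) (rule le[OF set_mt_state])
  qed
  ultimately show ?thesis by simp
qed

lemma step_eq:
  fixes F :: "config \<Rightarrow> real"
  assumes eq: "\<And>\<eta>. minv n \<eta> \<Longrightarrow> measure_pmf.expectation (mt_step d \<eta>) F = F \<eta>"
    and bF: "\<And>x. \<bar>F x\<bar> \<le> B"
  shows "measure_pmf.expectation (mt_state d (Suc n)) F = measure_pmf.expectation (mt_state d n) F"
proof -
  have "measure_pmf.expectation (mt_state d (Suc n)) F
      = measure_pmf.expectation (mt_state d n) (\<lambda>\<eta>. measure_pmf.expectation (mt_step d \<eta>) F)"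
    by (simp only: mt_state_Suc integral_bind_pmf'[OF bF])
  also have "\<dots> = measure_pmf.expectation (mt_state d n) F"
    by (rule integral_cong_AE) (auto intro!: AE_pmfI eq set_mt_state)
  finally show ?thesis .
qed

lemma exp_mono_state:
  fixes F G :: "config \<Rightarrow> real"
  assumes le: "\<And>\<eta>. minv n \<eta> \<Longrightarrow> G \<eta> \<le> F \<eta>"
    and bF: "\<And>x. \<bar>F x\<bar> \<le> B" and bG: "\<And>x. \<bar>G x\<bar> \<le> B'"
  shows "measure_pmf.expectation (mt_state d n) G \<le> measure_pmf.expectation (mt_state d n) F"
  by (rule integral_mono_AE) (auto intro!: AE_pmfI le set_mt_state integrable_bnd[OF bF] integrable_bnd[OF bG])

lemma exp_cong_state:
  fixes F G :: "config \<Rightarrow> real"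
  assumes le: "\<And>\<eta>. minv n \<eta> \<Longrightarrow> G \<eta> = F \<eta>"
  shows "measure_pmf.expectation (mt_state d n) G = measure_pmf.expectation (mt_state d n) F"
  by (rule integral_cong_AE) (auto intro!: AE_pmfI le set_mt_state)

lemma closed_le:
  assumes m: "minv n \<eta>" and cl: "\<And>\<eta>'. \<eta>' \<in> set_pmf (mt_step d \<eta>) \<Longrightarrow> Q \<eta> \<Longrightarrow> Q \<eta>'"
  shows "(if Q \<eta> then 1 else 0) \<le> measure_pmf.expectation (mt_step d \<eta>) (\<lambda>\<eta>. if Q \<eta> then 1 else 0::real)"
proof (cases "Q \<eta>")
  case True
  have "1 \<le> measure_pmf.expectation (mt_step d \<eta>) (\<lambda>\<eta>. if Q \<eta> then 1 else 0::real)"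
    by (rule measure_pmf.integral_ge_const) (auto intro!: integrable_bnd[where B=1] AE_pmfI cl True)
  then show ?thesis using True by simp
qed (simp)

lemma closed_step:
  assumes m: "minv n \<eta>" and e: "\<eta>' \<in> set_pmf (mt_step d \<eta>)"
  shows "(\<eta> v \<noteq> -1 \<longrightarrow> \<eta>' v \<noteq> -1) \<and> (\<eta> v = 1 \<longrightarrow> \<eta>' v = 1)"
  using e unfolding set_mt_step[OF m]
  by (auto split: if_splits simp: contact_def)

definition kk :: "nat \<Rightarrow> vertex \<Rightarrow> config \<Rightarrow> nat" where
  "kk d v \<eta> = card {c \<in> children d v. \<eta> c \<noteq> -1}"

definition hh :: "nat \<Rightarrow> nat \<Rightarrow> nat \<Rightarrow> real" where
  "hh d j k = (\<Prod>i\<in>{k..<j}. real (d - i) / real (Suc d))"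

definition TT :: "nat \<Rightarrow> nat \<Rightarrow> real" where
  "TT d j = hh d j 0"

definition gg :: "nat \<Rightarrow> vertex \<Rightarrow> nat \<Rightarrow> config \<Rightarrow> real" where
  "gg d v j \<eta> = (if \<eta> v = -1 then 0 else if \<eta> v = 0 then hh d j (kk d v \<eta>)
      else (if j \<le> kk d v \<eta> then 1 else 0))"

definition ff :: "nat \<Rightarrow> vertex \<Rightarrow> nat \<Rightarrow> config \<Rightarrow> real" where
  "ff d v j \<eta> = gg d v j \<eta> - TT d j * (if \<eta> v \<noteq> -1 then 1 else 0)"

lemma hh_ge: "j \<le> k \<Longrightarrow> hh d j k = 1"
  by (simp add: hh_def)

lemma hh_rec: "k < j \<Longrightarrow> hh d j k = real (d - k) / real (Suc d) * hh d j (Suc k)"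
  by (simp add: hh_def prod.atLeast_Suc_lessThan)

lemma hh_nonneg: "0 \<le> hh d j k"
  by (simp add: hh_def prod_nonneg)

lemma hh_le1: "hh d j k \<le> 1"
  unfolding hh_def by (rule prod_le_1) auto

lemma TT_bnd: "0 \<le> TT d j" "TT d j \<le> 1"
  by (simp_all add: TT_def hh_nonneg hh_le1)

lemma hh_key:
  assumes "k \<le> d"
  shows "real (Suc d) * hh d j k = real (d - k) * hh d j (Suc k) + real (Suc k) * (if j \<le> k then 1 else 0)"
proof (cases "j \<le> k")
  case True
  then show ?thesis using assms by (simp add: hh_ge of_nat_diff)
next
  case False
  then show ?thesis by (simp add: hh_rec)
qed

lemma gg_bnd: "0 \<le> gg d v j \<eta>" "gg d v j \<eta> \<le> 1"
  by (auto simp: gg_def hh_nonneg hh_le1)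

lemma ff_bnd: "\<bar>ff d v j \<eta>\<bar> \<le> 2"
  using gg_bnd[of d v j \<eta>] TT_bnd[of d j] by (auto simp: ff_def abs_le_iff)

lemma ff_local: "\<eta>' v = \<eta> v \<Longrightarrow> kk d v \<eta>' = kk d v \<eta> \<Longrightarrow> ff d v j \<eta>' = ff d v j \<eta>"
  by (simp add: ff_def gg_def)

lemma children_tl: "c \<in> children d v \<Longrightarrow> c \<noteq> [] \<and> tl c = v"
  by (auto simp: children_def split: if_splits)

lemma v_notin_children: "v \<notin> children d v"
  by (auto simp: children_def dest: arg_cong[of _ _ length])

lemma kk_upd_other: "c \<notin> children d v \<Longrightarrow> kk d v (\<eta>(c := x)) = kk d v \<eta>"
  unfolding kk_def by (rule arg_cong[where f=card]) auto

lemma kk_upd_keep: "\<eta> c \<noteq> -1 \<Longrightarrow> x \<noteq> -1 \<Longrightarrow> kk d v (\<eta>(c := x)) = kk d v \<eta>"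
  unfolding kk_def by (rule arg_cong[where f=card]) auto

lemma kk_ign: "minv n \<eta> \<Longrightarrow> \<eta> v = -1 \<Longrightarrow> kk d v \<eta> = 0"
proof -
  assume m: "minv n \<eta>" and v: "\<eta> v = -1"
  have "{c \<in> children d v. \<eta> c \<noteq> -1} = {}"
    using m v children_tl unfolding minv_def by blast
  then show ?thesis unfolding kk_def by (metis card.empty)
qed

lemma ff_nonv:
  assumes m: "minv n \<eta>" and p: "(s, w) \<in> PS d \<eta>" and sv: "s \<noteq> v"
  shows "ff d v j (contact \<eta> (s, w)) = ff d v j \<eta>"
proof -
  have s0: "\<eta> s = 0" and wn: "w \<in> nbrs d s" using p by (auto simp: PS_def)
  show ?thesis
  proof (cases "\<eta> w = -1")
    case True
    have ce: "contact \<eta> (s, w) = \<eta>(w := 0)" using True by (simp add: contact_def)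
    show ?thesis
    proof (cases "w = v")
      case True
      with \<open>\<eta> w = -1\<close> have "\<eta> v = -1" by simp
      then have k0: "kk d v \<eta> = 0" using kk_ign[OF m] by blast
      have "kk d v (\<eta>(v := 0)) = 0" using k0 kk_upd_other[OF v_notin_children] by simp
      then show ?thesis using \<open>\<eta> v = -1\<close> unfolding ce unfolding True
        by (simp add: ff_def gg_def TT_def)
    next
      case False
      have "w \<notin> children d v"
      proof
        assume "w \<in> children d v"
        then have "w \<noteq> []" "tl w = v" using children_tl by blast+
        have "\<eta> w \<noteq> -1" if "s \<noteq> []" "w = tl s" using m s0 that unfolding minv_def by auto
        then show False using nbrs_cases[OF wn] sv \<open>tl w = v\<close> \<open>\<eta> w = -1\<close> by auto
      qed
      then show ?thesis unfolding ce using False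
        by (intro ff_local) (auto simp: kk_upd_other)
    qed
  next
    case False
    have ce: "contact \<eta> (s, w) = \<eta>(s := 1)" using False by (simp add: contact_def)
    show ?thesis unfolding ce using sv s0
      by (intro ff_local) (auto simp: kk_upd_keep)
  qed
qed

lemma lin_help:
  fixes a b c x y z t :: real
  assumes "c * z = a * x + b * y" "a + b = c"
  shows "a * (x - t) + b * (y - t) = c * (z - t)"
proof -
  have "c = a + b" using assms(2) by simp
  then show ?thesis using assms(1) by (simp add: algebra_simps)
qed

lemma ff_vstep:
  assumes m: "minv n \<eta>" and v0: "\<eta> v = 0" and vne: "v \<noteq> []"
  shows "(\<Sum>w\<in>nbrs d v. ff d v j (contact \<eta> (v, w))) = real (Suc d) * ff d v j \<eta>"
proof -
  define K where "K = kk d v \<eta>"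
  define C0 where "C0 = {c \<in> children d v. \<eta> c = -1}"
  define C1 where "C1 = {c \<in> children d v. \<eta> c \<noteq> -1}"
  have fC0: "finite C0" and fC1: "finite C1" using finite_children by (auto simp: C0_def C1_def)
  have cC1: "card C1 = K" by (simp add: K_def kk_def C1_def)
  have un: "children d v = C0 \<union> C1" by (auto simp: C0_def C1_def)
  have di: "C0 \<inter> C1 = {}" by (auto simp: C0_def C1_def)
  have "card C0 + card C1 = d"
    using card_Un_disjoint[OF fC0 fC1 di] card_children_nonroot[OF vne, of d] un by simp
  then have cC0: "card C0 = d - K" and Kd: "K \<le> d" using cC1 by auto
  have tlv: "\<eta> (tl v) \<noteq> -1" using m v0 vne by (auto simp: minv_def)
  have tlC1: "tl v \<notin> C1" using tl_notin_children[OF vne] by (auto simp: C1_def)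
  have nb: "nbrs d v = C0 \<union> insert (tl v) C1"
    using tlv by (auto simp: nbrs_nonroot[OF vne] C0_def C1_def)
  have dis: "C0 \<inter> insert (tl v) C1 = {}" using tlv by (auto simp: C0_def C1_def)
  have e0: "ff d v j (contact \<eta> (v, c)) = hh d j (Suc K) - TT d j" if "c \<in> C0" for c
  proof -
    have c: "c \<in> children d v" "\<eta> c = -1" using that by (auto simp: C0_def)
    have cv: "c \<noteq> v" using c v0 by auto
    have "{x \<in> children d v. (\<eta>(c := 0)) x \<noteq> -1} = insert c C1" using c by (auto simp: C1_def)
    moreover have "c \<notin> C1" using c by (simp add: C1_def)
    ultimately have "kk d v (\<eta>(c := 0)) = Suc K" using fC1 cC1 by (simp add: kk_def)
    then show ?thesis using c cv v0 by (simp add: contact_def ff_def gg_def)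
  qed
  have e1: "ff d v j (contact \<eta> (v, w)) = (if j \<le> K then 1 else 0) - TT d j" if "w \<in> insert (tl v) C1" for w
  proof -
    have "\<eta> w \<noteq> -1" using that tlv by (auto simp: C1_def)
    then have "contact \<eta> (v, w) = \<eta>(v := 1)" by (simp add: contact_def)
    moreover have "kk d v (\<eta>(v := 1)) = K" by (simp add: K_def kk_upd_other[OF v_notin_children])
    ultimately show ?thesis by (simp add: ff_def gg_def)
  qed
  have "(\<Sum>w\<in>nbrs d v. ff d v j (contact \<eta> (v, w)))
      = (\<Sum>w\<in>C0. ff d v j (contact \<eta> (v, w))) + (\<Sum>w\<in>insert (tl v) C1. ff d v j (contact \<eta> (v, w)))"
    unfolding nb by (rule sum.union_disjoint) (use fC0 fC1 dis in auto)
  also have "\<dots> = (\<Sum>w\<in>C0. hh d j (Suc K) - TT d j) + (\<Sum>w\<in>insert (tl v) C1. (if j \<le> K then 1 else 0) - TT d j)"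
    using e0 e1 by simp
  also have "\<dots> = real (d - K) * (hh d j (Suc K) - TT d j) + real (Suc K) * ((if j \<le> K then 1 else 0) - TT d j)"
    using cC0 cC1 fC1 tlC1 by simp
  also have "\<dots> = real (Suc d) * (hh d j K - TT d j)"
    using lin_help[OF hh_key[OF Kd, of j]] Kd by simp
  also have "\<dots> = real (Suc d) * ff d v j \<eta>"
    using v0 by (simp add: ff_def gg_def K_def)
  finally show ?thesis .
qed

lemma ff_mart:
  assumes m: "minv n \<eta>" and tv: "tvertex d v" and vne: "v \<noteq> []"
  shows "measure_pmf.expectation (mt_step d \<eta>) (ff d v j) = ff d v j \<eta>"
proof (cases "PS d \<eta> = {}")
  case True then show ?thesis by (simp add: mt_step_alt)
next
  case False
  have fin: "finite (PS d \<eta>)" by (rule finite_PS[OF m])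
  define g where "g = (\<lambda>p. ff d v j (contact \<eta> p) - ff d v j \<eta>)"
  have zero: "(\<Sum>p\<in>PS d \<eta>. g p) = 0"
  proof -
    have "(\<Sum>p\<in>PS d \<eta>. g p) = (\<Sum>p\<in>PS d \<eta> \<inter> {p. fst p = v}. g p)"
    proof (rule sum.mono_neutral_right[OF fin])
      show "PS d \<eta> \<inter> {p. fst p = v} \<subseteq> PS d \<eta>" by blast
      show "\<forall>i\<in>PS d \<eta> - PS d \<eta> \<inter> {p. fst p = v}. g i = 0"
      proof
        fix p assume "p \<in> PS d \<eta> - PS d \<eta> \<inter> {p. fst p = v}"
        then obtain s w where "p = (s, w)" "(s, w) \<in> PS d \<eta>" "s \<noteq> v" by (cases p) auto
        then show "g p = 0" by (simp add: g_def ff_nonv[OF m])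
      qed
    qed
    also have "\<dots> = 0"
    proof (cases "\<eta> v = 0")
      case True
      have "PS d \<eta> \<inter> {p. fst p = v} = Pair v ` nbrs d v" using True tv by (auto simp: PS_def)
      then have "(\<Sum>p\<in>PS d \<eta> \<inter> {p. fst p = v}. g p) = (\<Sum>w\<in>nbrs d v. g (v, w))"
        by (simp add: sum.reindex inj_on_def)
      also have "\<dots> = (\<Sum>w\<in>nbrs d v. ff d v j (contact \<eta> (v, w))) - real (card (nbrs d v)) * ff d v j \<eta>"
        by (simp add: g_def sum_subtractf)
      also have "\<dots> = 0" using ff_vstep[OF m True vne] card_nbrs_nonroot[OF vne] by simp
      finally show ?thesis .
    next
      case False
      then have "PS d \<eta> \<inter> {p. fst p = v} = {}" by (auto simp: PS_def)
      then show ?thesis by simp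
    qed
    finally show ?thesis .
  qed
  then have "(\<Sum>p\<in>PS d \<eta>. ff d v j (contact \<eta> p)) = real (card (PS d \<eta>)) * ff d v j \<eta>"
    by (simp add: g_def sum_subtractf)
  moreover have "card (PS d \<eta>) \<noteq> 0" using fin False by simp
  ultimately show ?thesis using False fin by (simp add: mt_step_alt integral_pmf_of_set)
qed

lemma stif_step:
  assumes m: "minv n \<eta>" and tv: "tvertex d v" and vne: "v \<noteq> []"
  shows "(if \<eta> v = 1 then 1 else 0) + (if \<eta> v = 0 then 1 / (real (Suc d) * real (Suc n)) else 0)
          \<le> measure_pmf.expectation (mt_step d \<eta>) (\<lambda>\<eta>. if \<eta> v = 1 then 1 else 0::real)"
proof (cases "\<eta> v = 0")
  case False
  then have "(if \<eta> v = 1 then 1 else 0) + (if \<eta> v = 0 then 1 / (real (Suc d) * real (Suc n)) else 0)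
      = (if \<eta> v = 1 then 1 else (0::real))" by simp
  with closed_le[OF m, of d "\<lambda>\<eta>. \<eta> v = 1"] closed_step[OF m] show ?thesis by auto
next
  case True
  have tlv: "\<eta> (tl v) \<noteq> -1" using m True vne by (auto simp: minv_def)
  have inP: "(v, tl v) \<in> PS d \<eta>" using True tv vne by (auto simp: PS_def nbrs_def)
  then have ne: "PS d \<eta> \<noteq> {}" by blast
  have fin: "finite (PS d \<eta>)" by (rule finite_PS[OF m])
  have cpos: "0 < card (PS d \<eta>)" using fin ne by (simp add: card_gt_0_iff)
  have cle: "card (PS d \<eta>) \<le> Suc d * Suc n" by (rule card_PS[OF m])
  have "1 \<le> (\<Sum>p\<in>PS d \<eta>. (\<lambda>\<eta>. if \<eta> v = 1 then 1 else 0::real) (contact \<eta> p))"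
  proof -
    have "(\<lambda>\<eta>. if \<eta> v = 1 then 1 else 0::real) (contact \<eta> (v, tl v)) = 1"
      using tlv by (simp add: contact_def)
    moreover have "(\<lambda>\<eta>. if \<eta> v = 1 then 1 else 0::real) (contact \<eta> (v, tl v))
        \<le> (\<Sum>p\<in>PS d \<eta>. (\<lambda>\<eta>. if \<eta> v = 1 then 1 else 0::real) (contact \<eta> p))"
      by (rule member_le_sum[OF inP]) (auto simp: fin)
    ultimately show ?thesis by simp
  qed
  then have "1 / real (card (PS d \<eta>)) \<le> (\<Sum>p\<in>PS d \<eta>. (\<lambda>\<eta>. if \<eta> v = 1 then 1 else 0::real) (contact \<eta> p)) / real (card (PS d \<eta>))"
    using cpos by (simp add: divide_right_mono)
  moreover have "1 / (real (Suc d) * real (Suc n)) \<le> 1 / real (card (PS d \<eta>))"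
  proof -
    have "real (card (PS d \<eta>)) \<le> real (Suc d) * real (Suc n)" using cle
      by (metis of_nat_le_iff of_nat_mult)
    then show ?thesis using cpos by (simp add: frac_le)
  qed
  ultimately show ?thesis using True ne fin
    by (simp add: mt_step_alt integral_pmf_of_set del: of_nat_Suc)
qed

definition EXs :: "nat \<Rightarrow> nat \<Rightarrow> (config \<Rightarrow> real) \<Rightarrow> real" where
  "EXs d n F = measure_pmf.expectation (mt_state d n) F"

definition ind :: "bool \<Rightarrow> real" where "ind b = (if b then 1 else 0)"

lemma ind_bnd[simp]: "\<bar>ind b\<bar> \<le> 1" "0 \<le> ind b" "ind b \<le> 1"
  by (auto simp: ind_def)

lemma EXs_add: "(\<And>x. \<bar>F x\<bar> \<le> B) \<Longrightarrow> (\<And>x. \<bar>G x\<bar> \<le> B') \<Longrightarrow> EXs d n (\<lambda>x. F x + G x) = EXs d n F + EXs d n G"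
  unfolding EXs_def by (rule Bochner_Integration.integral_add) (auto intro: integrable_bnd)

lemma EXs_diff: "(\<And>x. \<bar>F x\<bar> \<le> B) \<Longrightarrow> (\<And>x. \<bar>G x\<bar> \<le> B') \<Longrightarrow> EXs d n (\<lambda>x. F x - G x) = EXs d n F - EXs d n G"
  unfolding EXs_def by (rule Bochner_Integration.integral_diff) (auto intro: integrable_bnd)

lemma EXs_cmult: "EXs d n (\<lambda>x. c * F x) = c * EXs d n F"
  unfolding EXs_def by simp

lemma EXs_ind_bnd: "0 \<le> EXs d n (\<lambda>x. ind (P x))" "EXs d n (\<lambda>x. ind (P x)) \<le> 1"
proof -
  show "0 \<le> EXs d n (\<lambda>x. ind (P x))" unfolding EXs_def by (rule integral_nonneg_AE) auto
  show "EXs d n (\<lambda>x. ind (P x)) \<le> 1" unfolding EXs_def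
    by (rule measure_pmf.integral_le_const) (auto intro: integrable_bnd[where B=1])
qed

lemma ind_comb: "c \<le> 1 \<Longrightarrow> 0 \<le> (c::real) \<Longrightarrow> \<bar>ind a + c * ind b\<bar> \<le> 2"
  by (auto simp: ind_def)

lemma EXs_ind_prob: "EXs d n (\<lambda>x. ind (P x)) = measure_pmf.prob (mt_state d n) {x. P x}"
  unfolding EXs_def ind_def by (simp add: prob_as_exp)

context
  fixes d :: nat and v :: vertex
  assumes tv: "tvertex d v" and vne: "v \<noteq> []"
begin

definition "EI n = EXs d n (\<lambda>\<eta>. ind (\<eta> v \<noteq> -1))"
definition "ESt n = EXs d n (\<lambda>\<eta>. ind (\<eta> v = 1))"
definition "ESp n = EXs d n (\<lambda>\<eta>. ind (\<eta> v = 0))"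
definition "EA j n = EXs d n (\<lambda>\<eta>. ind (\<eta> v \<noteq> -1 \<and> j \<le> kk d v \<eta>))"

lemma EI_mono: "EI n \<le> EI (Suc n)"
  unfolding EI_def EXs_def
proof (rule step_le[where B=1 and B'=1])
  fix \<eta> assume m: "minv n \<eta>"
  show "ind (\<eta> v \<noteq> -1) \<le> measure_pmf.expectation (mt_step d \<eta>) (\<lambda>\<eta>. ind (\<eta> v \<noteq> -1))"
    using closed_le[OF m, of d "\<lambda>\<eta>. \<eta> v \<noteq> -1"] closed_step[OF m] unfolding ind_def by blast
qed auto

lemma ESp_eq: "ESp n = EI n - ESt n"
proof -
  have "ESp n = EXs d n (\<lambda>\<eta>. ind (\<eta> v \<noteq> -1) - ind (\<eta> v = 1))"
    unfolding ESp_def EXs_def by (rule exp_cong_state) (auto simp: minv_def ind_def)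
  also have "\<dots> = EI n - ESt n" unfolding EI_def ESt_def by (rule EXs_diff[where B=1 and B'=1]) auto
  finally show ?thesis .
qed

lemma ESt_step: "ESt n + ESp n / (real (Suc d) * real (Suc n)) \<le> ESt (Suc n)"
proof -
  have "ESt n + ESp n / (real (Suc d) * real (Suc n))
      = EXs d n (\<lambda>\<eta>. ind (\<eta> v = 1) + 1 / (real (Suc d) * real (Suc n)) * ind (\<eta> v = 0))"
  proof -
    define c where "c = 1 / (real (Suc d) * real (Suc n))"
    have x1: "1 \<le> real (Suc d) * real (Suc n)" using mult_mono[of 1 "real (Suc d)" 1 "real (Suc n)"] by simp
    have c1: "c \<le> 1" "0 \<le> c" using x1 by (simp_all add: c_def divide_le_eq_1)
    have "EXs d n (\<lambda>\<eta>. ind (\<eta> v = 1) + c * ind (\<eta> v = 0))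
        = EXs d n (\<lambda>\<eta>. ind (\<eta> v = 1)) + EXs d n (\<lambda>\<eta>. c * ind (\<eta> v = 0))"
      by (rule EXs_add[where B=1 and B'=1]) (use c1 in \<open>auto simp: ind_def\<close>)
    then show ?thesis unfolding ESt_def ESp_def EXs_cmult c_def by simp
  qed
  also have "\<dots> \<le> ESt (Suc n)"
    unfolding ESt_def EXs_def
  proof (rule step_le[where B=1 and B'=2])
    fix \<eta> assume m: "minv n \<eta>"
    show "ind (\<eta> v = 1) + 1 / (real (Suc d) * real (Suc n)) * ind (\<eta> v = 0)
        \<le> measure_pmf.expectation (mt_step d \<eta>) (\<lambda>\<eta>. ind (\<eta> v = 1))"
      using stif_step[OF m tv vne] by (simp add: ind_def if_distrib cong: if_cong)
  next
    fix x
    have x1: "1 \<le> real (Suc d) * real (Suc n)" using mult_mono[of 1 "real (Suc d)" 1 "real (Suc n)"] by simp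
    have "1 / (real (Suc d) * real (Suc n)) \<le> 1" using x1 by (simp add: divide_le_eq_1)
    moreover have "0 \<le> 1 / (real (Suc d) * real (Suc n))" by simp
    ultimately show "\<bar>ind (x v = 1) + 1 / (real (Suc d) * real (Suc n)) * ind (x v = 0)\<bar> \<le> 2"
      by (rule ind_comb)
  qed (auto)
  finally show ?thesis .
qed

lemma Eff_zero: "EXs d n (ff d v j) = 0"
proof (induction n)
  case 0
  have "mt_init v = -1" using vne by (simp add: mt_init_def)
  then show ?case by (simp add: EXs_def mt_state_0 ff_def gg_def)
next
  case (Suc n)
  have "EXs d (Suc n) (ff d v j) = EXs d n (ff d v j)"
    unfolding EXs_def by (rule step_eq[where B=2]) (auto intro: ff_mart[OF _ tv vne] ff_bnd)
  then show ?case using Suc by simp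
qed

lemma Egg: "EXs d n (gg d v j) = TT d j * EI n"
proof -
  have "0 = EXs d n (\<lambda>\<eta>. gg d v j \<eta> - TT d j * ind (\<eta> v \<noteq> -1))"
    using Eff_zero[of n j] unfolding ff_def ind_def by simp
  also have "\<dots> = EXs d n (gg d v j) - EXs d n (\<lambda>\<eta>. TT d j * ind (\<eta> v \<noteq> -1))"
    by (rule EXs_diff[where B=1 and B'=1]) (auto simp: ind_def gg_bnd TT_bnd abs_le_iff)
  finally show ?thesis by (simp add: EXs_cmult EI_def)
qed

lemma EA_le: "EA j n \<le> TT d j * EI n"
proof -
  have "EA j n \<le> EXs d n (gg d v j)"
    unfolding EA_def EXs_def
  proof (rule exp_mono_state[where B=1 and B'=1])
    fix \<eta> assume m: "minv n \<eta>"
    then have "\<eta> v = -1 \<or> \<eta> v = 0 \<or> \<eta> v = 1" by (auto simp: minv_def)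
    then show "ind (\<eta> v \<noteq> -1 \<and> j \<le> kk d v \<eta>) \<le> gg d v j \<eta>"
      by (auto simp: ind_def gg_def hh_ge hh_nonneg)
  qed (auto simp: gg_bnd abs_le_iff)
  then show ?thesis by (simp add: Egg)
qed

lemma EA_ge: "TT d j * EI n \<le> EA j n + ESp n"
proof -
  have "EXs d n (gg d v j) \<le> EXs d n (\<lambda>\<eta>. ind (\<eta> v \<noteq> -1 \<and> j \<le> kk d v \<eta>) + ind (\<eta> v = 0))"
    unfolding EXs_def
  proof (rule exp_mono_state[where B=2 and B'=1])
    fix \<eta> assume m: "minv n \<eta>"
    then have "\<eta> v = -1 \<or> \<eta> v = 0 \<or> \<eta> v = 1" by (auto simp: minv_def)
    then show "gg d v j \<eta> \<le> ind (\<eta> v \<noteq> -1 \<and> j \<le> kk d v \<eta>) + ind (\<eta> v = 0)"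
      using hh_le1[of d j "kk d v \<eta>"] by (auto simp: ind_def gg_def)
  qed (auto simp: gg_bnd abs_le_iff ind_def)
  also have "\<dots> = EA j n + ESp n" unfolding EA_def ESp_def
    by (rule EXs_add[where B=1 and B'=1]) auto
  finally show ?thesis by (simp add: Egg)
qed

end

lemma fs_help: "(a::real) > 0 \<Longrightarrow> b > 0 \<Longrightarrow> L > 0 \<Longrightarrow> (2*a/L)*(e/(a*b)) = (2*e/L)*inverse b"
  by (simp add: field_simps)

context
  fixes d :: nat and v :: vertex
  assumes tv: "tvertex d v" and vne: "v \<noteq> []"
begin

lemma EI_bnd: "0 \<le> EI d v n" "EI d v n \<le> 1"
  unfolding EI_def[OF tv vne] by (rule EXs_ind_bnd)+
lemma ESt_bnd: "0 \<le> ESt d v n" "ESt d v n \<le> 1"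
  unfolding ESt_def[OF tv vne] by (rule EXs_ind_bnd)+
lemma ESp_bnd: "0 \<le> ESp d v n" "ESp d v n \<le> 1"
  unfolding ESp_def[OF tv vne] by (rule EXs_ind_bnd)+
lemma EA_bnd: "0 \<le> EA d v j n" "EA d v j n \<le> 1"
  unfolding EA_def[OF tv vne] by (rule EXs_ind_bnd)+

lemma EI_inc: "incseq (EI d v)"
  by (rule incseq_SucI) (rule EI_mono[OF tv vne])

lemma ESt_inc: "incseq (ESt d v)"
proof (rule incseq_SucI)
  fix n
  have "0 \<le> ESp d v n / (real (Suc d) * real (Suc n))" using ESp_bnd by simp
  then show "ESt d v n \<le> ESt d v (Suc n)" using ESt_step[OF tv vne, of n] by linarith
qed

lemma sum_bound: "(\<Sum>n<N. ESp d v n / (real (Suc d) * real (Suc n))) \<le> ESt d v N - ESt d v 0"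
proof (induction N)
  case 0 then show ?case by simp
next
  case (Suc N) then show ?case using ESt_step[OF tv vne, of N] by simp
qed

lemma ESp_lim: "ESp d v \<longlonglongrightarrow> 0"
proof -
  obtain LI where LI: "EI d v \<longlonglongrightarrow> LI"
    by (rule incseq_convergent[OF EI_inc, where B=1]) (use EI_bnd in auto)
  obtain LS where LS: "ESt d v \<longlonglongrightarrow> LS"
    by (rule incseq_convergent[OF ESt_inc, where B=1]) (use ESt_bnd in auto)
  have lim: "ESp d v \<longlonglongrightarrow> LI - LS"
  proof -
    have "(\<lambda>n. EI d v n - ESt d v n) \<longlonglongrightarrow> LI - LS" by (rule tendsto_diff[OF LI LS])
    moreover have "ESp d v = (\<lambda>n. EI d v n - ESt d v n)" using ESp_eq[OF tv vne] by (intro ext) simp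
    ultimately show ?thesis by simp
  qed
  have L0: "0 \<le> LI - LS" by (rule LIMSEQ_le_const[OF lim]) (use ESp_bnd in auto)
  have summ: "summable (\<lambda>n. ESp d v n / (real (Suc d) * real (Suc n)))"
  proof (rule summableI_nonneg_bounded)
    fix n show "0 \<le> ESp d v n / (real (Suc d) * real (Suc n))" using ESp_bnd by simp
  next
    fix N show "(\<Sum>n<N. ESp d v n / (real (Suc d) * real (Suc n))) \<le> 1"
      using sum_bound[of N] ESt_bnd[of N] ESt_bnd[of 0] by linarith
  qed
  have "\<not> 0 < LI - LS"
  proof
    assume pos: "0 < LI - LS"
    define L where "L = LI - LS"
    have ev: "eventually (\<lambda>n. L / 2 < ESp d v n) sequentially"
      using order_tendstoD(1)[OF lim, of "L/2"] pos by (simp add: L_def)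
    have "summable (\<lambda>n. inverse (real (Suc n)))"
    proof (rule summable_comparison_test_ev)
      show "summable (\<lambda>n. (2 * real (Suc d) / L) * (ESp d v n / (real (Suc d) * real (Suc n))))"
        by (rule summable_mult[OF summ])
      show "eventually (\<lambda>n. norm (inverse (real (Suc n))) \<le> (2 * real (Suc d) / L) * (ESp d v n / (real (Suc d) * real (Suc n)))) sequentially"
      proof (rule eventually_mono[OF ev])
        fix n assume a: "L / 2 < ESp d v n"
        have Lp: "0 < L" using pos by (simp add: L_def)
        have "(2 * real (Suc d) / L) * (ESp d v n / (real (Suc d) * real (Suc n)))
              = (2 * ESp d v n / L) * inverse (real (Suc n))"
          using Lp by (intro fs_help) auto
        moreover have g1: "1 \<le> 2 * ESp d v n / L" using a Lp by (simp add: field_simps)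
        moreover have "inverse (real (Suc n)) \<le> (2 * ESp d v n / L) * inverse (real (Suc n))"
          using mult_right_mono[OF g1, of "inverse (real (Suc n))"] by simp
        ultimately show "norm (inverse (real (Suc n))) \<le> (2 * real (Suc d) / L) * (ESp d v n / (real (Suc d) * real (Suc n)))"
          by (metis abs_of_nonneg of_nat_0_le_iff real_norm_def inverse_nonnegative_iff_nonnegative)
      qed
    qed
    then have "summable (\<lambda>n. inverse (real n))"
      using summable_Suc_iff[where f="\<lambda>n. inverse (real n)"] by simp
    then show False using not_summable_harmonic[where 'a=real] by simp
  qed
  with L0 have "LI - LS = 0" by linarith
  with lim show ?thesis by simp
qed

lemma main_q:
  obtains q where "EI d v \<longlonglongrightarrow> q" "\<And>n. EI d v n \<le> q" "\<And>j. mt_q d v j = TT d j * q"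
proof -
  obtain q where q: "EI d v \<longlonglongrightarrow> q" "\<And>n. EI d v n \<le> q"
    by (rule incseq_convergent[OF EI_inc, where B=1]) (use EI_bnd in auto)
  have "mt_q d v j = TT d j * q" for j
  proof -
    have eq: "mt_q d v j = (SUP n. EA d v j n)"
      unfolding mt_q_def EA_def[OF tv vne] EXs_ind_prob kk_def by simp
    have bdd: "bdd_above (range (EA d v j))" by (rule bdd_aboveI[where M=1]) (auto simp: EA_bnd)
    have "(SUP n. EA d v j n) \<le> TT d j * q"
    proof (rule cSUP_least)
      fix n
      have "EA d v j n \<le> TT d j * EI d v n" by (rule EA_le[OF tv vne])
      also have "\<dots> \<le> TT d j * q" using q(2) TT_bnd by (simp add: mult_left_mono)
      finally show "EA d v j n \<le> TT d j * q" .
    qed simp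
    moreover have "TT d j * q \<le> (SUP n. EA d v j n)"
    proof (rule LIMSEQ_le_const2)
      show "(\<lambda>n. TT d j * EI d v n - ESp d v n) \<longlonglongrightarrow> TT d j * q"
        using tendsto_diff[OF tendsto_mult_left[OF q(1), of "TT d j"] ESp_lim] by simp
      show "\<exists>N. \<forall>n\<ge>N. TT d j * EI d v n - ESp d v n \<le> (SUP n. EA d v j n)"
      proof (intro exI allI impI)
        fix n
        have "TT d j * EI d v n - ESp d v n \<le> EA d v j n" using EA_ge[OF tv vne, of j n] by simp
        also have "\<dots> \<le> (SUP n. EA d v j n)" by (rule cSUP_upper[OF _ bdd]) simp
        finally show "TT d j * EI d v n - ESp d v n \<le> (SUP n. EA d v j n)" .
      qed
    qed
    ultimately show ?thesis using eq by simp
  qed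
  then show ?thesis using q that by blast
qed

end

lemma tvertex_drop: "tvertex d v \<Longrightarrow> tvertex d (drop i v)"
proof -
  assume t: "tvertex d v"
  show ?thesis
  proof (cases "drop i v = []")
    case True then show ?thesis by (simp add: tvertex_def)
  next
    case False
    then have il: "i < length v" by simp
    then have "v \<noteq> []" by auto
    then have "last v \<le> d" "\<forall>x\<in>set (butlast v). x < d" using t by (auto simp: tvertex_def)
    moreover have "set (butlast (drop i v)) \<subseteq> set (butlast v)"
      by (simp add: butlast_drop set_drop_subset)
    ultimately show ?thesis using il by (auto simp: tvertex_def)
  qed
qed

definition zeta :: "vertex \<Rightarrow> nat \<Rightarrow> config" where
  "zeta v k = (\<lambda>u. if (\<exists>i. u = drop i v) \<and> length u \<le> k then 0 else -1)"

lemma zeta_in: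
  assumes tv: "tvertex d v" and vne: "v \<noteq> []"
  shows "k \<le> length v \<Longrightarrow> zeta v k \<in> set_pmf (mt_state d k)"
proof (induction k)
  case 0
  have "zeta v 0 = mt_init"
  proof
    fix u
    have "u = [] \<Longrightarrow> \<exists>i. u = drop i v" by (intro exI[of _ "length v"]) simp
    then show "zeta v 0 u = mt_init u" by (auto simp: zeta_def mt_init_def)
  qed
  then show ?case by (simp add: mt_state_0)
next
  case (Suc k)
  define m where "m = length v"
  have km: "k < m" using Suc.prems by (simp add: m_def)
  have zk: "zeta v k \<in> set_pmf (mt_state d k)" using Suc km by (simp add: m_def)
  have mi: "minv k (zeta v k)" by (rule set_mt_state[OF zk])
  define s where "s = drop (m - k) v"
  define w where "w = drop (m - Suc k) v"
  have ls: "length s = k" and lw: "length w = Suc k" using km by (simp_all add: s_def w_def m_def)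
  have wc: "w = v ! (m - Suc k) # s"
    unfolding w_def s_def using km Cons_nth_drop_Suc[of "m - Suc k" v]
    by (simp add: m_def Suc_diff_Suc)
  have ts: "tvertex d s" by (simp add: s_def tvertex_drop[OF tv])
  have s0: "zeta v k s = 0" using ls by (auto simp: zeta_def s_def)
  have wm: "zeta v k w = -1" using lw by (auto simp: zeta_def)
  have wn: "w \<in> nbrs d s"
  proof (cases "k = 0")
    case True
    then have "s = []" using ls by simp
    moreover have "v ! (m - 1) = last v" using vne by (simp add: m_def last_conv_nth)
    moreover have "last v \<le> d" using tv vne by (simp add: tvertex_def)
    ultimately show ?thesis using wc True by (auto simp: nbrs_def children_def)
  next
    case False
    then have sne: "s \<noteq> []" using ls by auto
    have "m - Suc k < length (butlast v)" using False km by (simp add: m_def)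
    then have "butlast v ! (m - Suc k) = v ! (m - Suc k)" by (simp add: nth_butlast)
    moreover have "butlast v ! (m - Suc k) \<in> set (butlast v)"
      using \<open>m - Suc k < length (butlast v)\<close> by (rule nth_mem)
    ultimately have "v ! (m - Suc k) < d" using tv vne by (auto simp: tvertex_def)
    then show ?thesis using wc sne by (auto simp: nbrs_def children_def)
  qed
  have inP: "(s, w) \<in> PS d (zeta v k)" using ts s0 wn by (simp add: PS_def)
  have dw: "drop i v = w" if "length (drop i v) = Suc k" for i
  proof -
    have "i = m - Suc k" using that km by (simp add: m_def)
    then show ?thesis by (simp add: w_def)
  qed
  have wd: "\<exists>i. w = drop i v" unfolding w_def by blast
  have ce0: "contact (zeta v k) (s, w) = (zeta v k)(w := 0)" using wm by (simp add: contact_def)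
  have ce: "contact (zeta v k) (s, w) = zeta v (Suc k)"
  proof
    fix u
    show "contact (zeta v k) (s, w) u = zeta v (Suc k) u"
    proof (cases "u = w")
      case True
      then show ?thesis using wd lw ce0 by (simp add: zeta_def)
    next
      case False
      have nw: "\<not> ((\<exists>i. u = drop i v) \<and> length u = Suc k)"
      proof
        assume "(\<exists>i. u = drop i v) \<and> length u = Suc k"
        then obtain i where "u = drop i v" "length (drop i v) = Suc k" by blast
        then show False using dw False by blast
      qed
      have "zeta v k u = zeta v (Suc k) u"
        unfolding zeta_def using nw by (auto simp: le_Suc_eq)
      then show ?thesis using ce0 False by simp
    qed
  qed
  have "zeta v (Suc k) \<in> set_pmf (mt_step d (zeta v k))"
  proof -
    have ne: "PS d (zeta v k) \<noteq> {}" using inP by blast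
    have "zeta v (Suc k) \<in> contact (zeta v k) ` PS d (zeta v k)" using inP ce by (metis image_eqI)
    then show ?thesis using set_mt_step[OF mi, of d] ne by simp
  qed
  then show ?case using zk by (auto simp: mt_state_Suc)
qed

lemma EI_pos:
  assumes tv: "tvertex d v" and vne: "v \<noteq> []"
  shows "0 < EI d v (length v)"
proof -
  have z: "zeta v (length v) \<in> set_pmf (mt_state d (length v))" by (rule zeta_in[OF tv vne]) simp
  have "zeta v (length v) v = 0" unfolding zeta_def by (auto intro: exI[of _ 0])
  then have "0 < measure_pmf.prob (mt_state d (length v)) {\<eta>. \<eta> v \<noteq> -1}"
    by (intro measure_pmf_posI[OF z]) simp
  then show ?thesis unfolding EI_def[OF tv vne] EXs_ind_prob .
qed

lemma TT_0: "TT d 0 = 1" by (simp add: TT_def hh_def)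

lemma TT_Suc: "TT d (Suc i) = TT d i * (real (d - i) / real (Suc d))"
  by (simp add: TT_def hh_def)

lemma TT_fact: "i \<le> d \<Longrightarrow> TT d i = fact d / fact (d - i) / real (Suc d) ^ i"
proof (induction i)
  case 0 then show ?case by (simp add: TT_0)
next
  case (Suc i)
  have e: "d - i = Suc (d - Suc i)" using Suc.prems by simp
  have "TT d (Suc i) = fact d / fact (d - i) / real (Suc d) ^ i * (real (d - i) / real (Suc d))"
    using Suc by (simp add: TT_Suc)
  also have "fact (d - i) = real (d - i) * (fact (d - Suc i) :: real)"
    by (simp only: e fact_Suc)
  finally show ?case using e by (simp add: field_simps del: of_nat_Suc)
qed

lemma TT_diff:
  assumes "i \<le> d"
  shows "TT d i - TT d (Suc i) = real (d choose i) * fact (i + 1) / real (d + 1) ^ (i + 1)"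
proof -
  have b: "fact i * real (d choose i) = fact d / fact (d - i)" by (rule fact_binomial[OF assms])
  have "TT d i - TT d (Suc i) = TT d i * (real (Suc i) / real (Suc d))"
    using assms by (simp add: TT_Suc field_simps of_nat_diff)
  also have "\<dots> = fact i * real (d choose i) / real (Suc d) ^ i * (real (Suc i) / real (Suc d))"
    using b TT_fact[OF assms] by simp
  also have "\<dots> = real (d choose i) * fact (i + 1) / real (d + 1) ^ (i + 1)"
    by (simp add: field_simps)
  finally show ?thesis .
qed

lemma TT1: "TT d 1 = real d / (real d + 1)"
  using TT_Suc[of d 0] by (simp add: TT_0)

lemma TT2: "TT d 2 = TT d 1 * (real (d - 1) / (real d + 1))"
  using TT_Suc[of d 1] by (simp add: numeral_2_eq_2)

lemma TT_last: "TT d (Suc d) = 0"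
  by (simp add: TT_Suc)

lemma tail_sum:
  fixes T :: "nat \<Rightarrow> real"
  shows "(\<Sum>i\<in>{0..m}. real i * (T i - T (Suc i))) = (\<Sum>i\<in>{1..m}. T i) - real m * T (Suc m)"
proof (induction m)
  case 0 then show ?case by simp
next
  case (Suc m)
  have "(\<Sum>i\<in>{1..Suc m}. T i) = (\<Sum>i\<in>{1..m}. T i) + T (Suc m)" by simp
  then show ?case using Suc by (simp add: algebra_simps)
qed

lemma ineq3:
  fixes x :: real assumes "3 \<le> x"
  shows "1 < x / (x + 1) + x / (x + 1) * ((x - 1) / (x + 1))"
proof -
  have p: "0 < x + 1" using assms by simp
  have "3 * x \<le> x * x" using mult_right_mono[OF assms, of x] assms by simp
  then have "1 + 2 * x < x * x" using assms by linarith
  then have h: "(x + 1) * (x + 1) < x * (x + 1) + x * (x - 1)" by (simp add: algebra_simps)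
  have ha: "x / (x + 1) * (x + 1) = x" using p by simp
  have hb: "(x - 1) / (x + 1) * (x + 1) = x - 1" using p by simp
  have "(x / (x + 1) + x / (x + 1) * ((x - 1) / (x + 1))) * ((x + 1) * (x + 1))
      = (x / (x + 1) * (x + 1)) * (x + 1) + (x / (x + 1) * (x + 1)) * ((x - 1) / (x + 1) * (x + 1))"
    by (simp only: algebra_simps)
  also have "\<dots> = x * (x + 1) + x * (x - 1)" by (simp only: ha hb)
  finally have e: "(x / (x + 1) + x / (x + 1) * ((x - 1) / (x + 1))) * ((x + 1) * (x + 1)) = x * (x + 1) + x * (x - 1)" .
  show ?thesis
  proof (rule ccontr)
    assume "\<not> ?thesis"
    then have "(x / (x + 1) + x / (x + 1) * ((x - 1) / (x + 1))) * ((x + 1) * (x + 1)) \<le> 1 * ((x + 1) * (x + 1))"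
      by (intro mult_right_mono) (use p in auto)
    then show False using e h by simp
  qed
qed

theorem lemma2:
  fixes d :: nat and v :: vertex
  assumes "d \<ge> 2" and "tvertex d v" and "v \<noteq> []"
  shows "(\<forall>i\<le>d. mt_X_dist d v i = real (d choose i) * fact (i + 1) / real (d + 1) ^ (i + 1))
         \<and> (mt_X_mean d v > 1 \<longleftrightarrow> d \<ge> 3)
         \<and> (d = 2 \<longrightarrow> mt_X_mean d v = 8 / 9)"
proof -
  note tv = assms(2) and vne = assms(3)
  obtain q where q: "EI d v \<longlonglongrightarrow> q" "\<And>n. EI d v n \<le> q" "\<And>j. mt_q d v j = TT d j * q"
    using main_q[OF tv vne] by blast
  have qpos: "0 < q" using EI_pos[OF tv vne] q(2)[of "length v"] by linarith
  have dist: "mt_X_dist d v i = TT d i - TT d (Suc i)" for i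
    using qpos by (simp add: mt_X_dist_def q(3) TT_0 field_simps)
  have mean: "mt_X_mean d v = (\<Sum>i\<in>{1..d}. TT d i)"
    unfolding mt_X_mean_def dist tail_sum TT_last by simp
  have P1: "\<forall>i\<le>d. mt_X_dist d v i = real (d choose i) * fact (i + 1) / real (d + 1) ^ (i + 1)"
    using dist TT_diff by simp
  have m2: "mt_X_mean d v = 8 / 9" if "d = 2"
  proof -
    have s12: "{1..2::nat} = {1,2}" by auto
    have "mt_X_mean d v = TT 2 1 + TT 2 2" using that mean s12 by simp
    also have "\<dots> = 8 / 9"
    proof -
      have "TT 2 1 = real 2 / (real 2 + 1)" by (rule TT1)
      then have a: "TT 2 1 = 2 / 3" by simp
      have b0: "TT 2 2 = TT 2 1 * (real (2 - 1) / (real 2 + 1))" by (rule TT2)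
      have b: "TT 2 2 = 2 / 9" unfolding b0 a by simp
      show ?thesis unfolding a b by simp
    qed
    finally show ?thesis .
  qed
  have m3: "1 < mt_X_mean d v" if "3 \<le> d"
  proof -
    have "(\<Sum>i\<in>{1,2}. TT d i) \<le> (\<Sum>i\<in>{1..d}. TT d i)"
      by (rule sum_mono2) (use that in \<open>auto simp: TT_bnd\<close>)
    moreover have "(\<Sum>i\<in>{1,2}. TT d i) = TT d 1 + TT d 2" by simp
    moreover have "TT d 1 + TT d 2 = real d / (real d + 1) + real d / (real d + 1) * ((real d - 1) / (real d + 1))"
      unfolding TT2 TT1 using that by (simp add: of_nat_diff)
    moreover have "1 < real d / (real d + 1) + real d / (real d + 1) * ((real d - 1) / (real d + 1))"
      by (rule ineq3) (use that in simp)
    ultimately show ?thesis using mean by linarith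
  qed
  have "mt_X_mean d v > 1 \<longleftrightarrow> d \<ge> 3"
  proof
    assume "mt_X_mean d v > 1"
    then show "d \<ge> 3" using m2 assms(1) by (cases "d = 2") auto
  qed (rule m3)
  then show ?thesis using P1 m2 by blast
qed

end
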